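(* For every interaction matrix $K\in[0,1]^{d\times d}$ there exists $a_0>0$ such that every discrete time regulatory network with interaction matrix $K$ (and any compatible threshold and activation matrices) and contraction rate $a\in[0,a_0)$ satisfies coordinatewise injectivity.
   Context: An interaction matrix is $K\in[0,1]^{d\times d}$ with $\sum_iK_{i,j}=1$ for each $j$; a compatible activation matrix $s\in\{-1,0,1\}^{d\times d}$ and threshold matrix $T\in[0,1]^{d\times d}$ satisfy $s_{i,j}=0$ iff $K_{i,j}=0$ and $T_{i,j}=0$ iff $K_{i,j}=0$. The network with contraction rate $a\in[0,1]$ is $F(x)_j=ax_j+(1-a)\sum_iK_{i,j}H(s_{i,j}(x_i-T_{i,j}))$ on $[0,1]^d$, with $H(x)=0$ for $x\le 0$ and $1$ otherwise. For each $j$ let $\mathcal F_j=\{x\mapsto ax+(1-a)\sum_{i=1}^d\epsilon_iK_{i,j}:\ \epsilon\in\{0,1\}^d\}$, maps $[0,1]\to[0,1]$. The network satisfies coordinatewise injectivity if for each $j$ and all $f,f'\in\mathcal F_j$ with $f\ne f'$, $f([0,1])\cap f'([0,1])=\emptyset$. *)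

theory Defs
  imports Complex_Main
begin

text \<open>Matrices of size d x d are functions nat => nat => real (resp. int) with
indices ranging over {..<d}; entries outside this range are irrelevant.\<close>

definition interaction_matrix :: "nat \<Rightarrow> (nat \<Rightarrow> nat \<Rightarrow> real) \<Rightarrow> bool" where
  "interaction_matrix d K \<longleftrightarrow>
     (\<forall>i<d. \<forall>j<d. 0 \<le> K i j \<and> K i j \<le> 1) \<and> (\<forall>j<d. (\<Sum>i<d. K i j) = 1)"

definition compatible_activation :: "nat \<Rightarrow> (nat \<Rightarrow> nat \<Rightarrow> real) \<Rightarrow> (nat \<Rightarrow> nat \<Rightarrow> int) \<Rightarrow> bool" where
  "compatible_activation d K s \<longleftrightarrow>
     (\<forall>i<d. \<forall>j<d. s i j \<in> {-1, 0, 1} \<and> (s i j = 0 \<longleftrightarrow> K i j = 0))"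

definition compatible_threshold :: "nat \<Rightarrow> (nat \<Rightarrow> nat \<Rightarrow> real) \<Rightarrow> (nat \<Rightarrow> nat \<Rightarrow> real) \<Rightarrow> bool" where
  "compatible_threshold d K T \<longleftrightarrow>
     (\<forall>i<d. \<forall>j<d. 0 \<le> T i j \<and> T i j \<le> 1 \<and> (T i j = 0 \<longleftrightarrow> K i j = 0))"

definition heaviside :: "real \<Rightarrow> real" where
  "heaviside x = (if x \<le> 0 then 0 else 1)"

definition network :: "nat \<Rightarrow> (nat \<Rightarrow> nat \<Rightarrow> real) \<Rightarrow> (nat \<Rightarrow> nat \<Rightarrow> int) \<Rightarrow> (nat \<Rightarrow> nat \<Rightarrow> real)
    \<Rightarrow> real \<Rightarrow> (nat \<Rightarrow> real) \<Rightarrow> nat \<Rightarrow> real" where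
  "network d K s T a x j =
     a * x j + (1 - a) * (\<Sum>i<d. K i j * heaviside (of_int (s i j) * (x i - T i j)))"

definition coord_maps :: "nat \<Rightarrow> (nat \<Rightarrow> nat \<Rightarrow> real) \<Rightarrow> real \<Rightarrow> nat \<Rightarrow> (real \<Rightarrow> real) set" where
  "coord_maps d K a j =
     {(\<lambda>x. a * x + (1 - a) * (\<Sum>i<d. \<epsilon> i * K i j)) | \<epsilon>. \<forall>i<d. \<epsilon> i \<in> {0, 1}}"

definition coordinatewise_injective :: "nat \<Rightarrow> (nat \<Rightarrow> nat \<Rightarrow> real) \<Rightarrow> real \<Rightarrow> bool" where
  "coordinatewise_injective d K a \<longleftrightarrow>
     (\<forall>j<d. \<forall>f\<in>coord_maps d K a j. \<forall>f'\<in>coord_maps d K a j.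
        (\<exists>x\<in>{0..1}. f x \<noteq> f' x) \<longrightarrow> f ` {0..1} \<inter> f' ` {0..1} = {})"

end

theory Submission
  imports Defs
begin

lemma sum_eps:
  fixes d :: nat and K :: "nat \<Rightarrow> nat \<Rightarrow> real"
  assumes "\<forall>i<d. \<epsilon> i \<in> {0, 1::real}"
  shows "(\<Sum>i<d. \<epsilon> i * K i j) = (\<Sum>i\<in>{i\<in>{..<d}. \<epsilon> i = 1}. K i j)"
proof -
  have "(\<Sum>i<d. \<epsilon> i * K i j) = (\<Sum>i<d. (if \<epsilon> i = 1 then K i j else 0))"
    using assms by (intro sum.cong) auto
  also have "\<dots> = (\<Sum>i\<in>{i\<in>{..<d}. \<epsilon> i = 1}. K i j)"
    by (subst sum.inter_filter) (auto simp: finite_lessThan)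
  finally show ?thesis .
qed

theorem mainTheorem5:
  fixes d :: nat and K :: "nat \<Rightarrow> nat \<Rightarrow> real"
  assumes "interaction_matrix d K"
  shows "\<exists>a0>0. \<forall>a. 0 \<le> a \<and> a < a0 \<and> a \<le> 1 \<longrightarrow>
           (\<forall>s T. compatible_activation d K s \<and> compatible_threshold d K T \<longrightarrow>
              coordinatewise_injective d K a)"
proof -
  define g where "g A j = (\<Sum>i\<in>A. K i j)" for A j
  define D where "D = {\<bar>g A j - g B j\<bar> | A B j. A \<subseteq> {..<d} \<and> B \<subseteq> {..<d} \<and> j < d \<and> g A j \<noteq> g B j}"
  have "D \<subseteq> (\<lambda>(A,B,j). \<bar>g A j - g B j\<bar>) ` (Pow {..<d} \<times> Pow {..<d} \<times> {..<d})"
    unfolding D_def by (auto intro!: image_eqI[where x="(A,B,j)" for A B j])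
  hence finD: "finite D" by (rule finite_subset) auto
  define \<delta> where "\<delta> = (if D = {} then 1 else Min D)"
  have Dpos: "\<forall>x\<in>D. x > 0" unfolding D_def by auto
  have dpos: "\<delta> > 0" unfolding \<delta>_def using finD Dpos by auto
  have dle: "\<forall>x\<in>D. \<delta> \<le> x" unfolding \<delta>_def using finD by auto
  show ?thesis
  proof (intro exI[of _ "min (1/2) (\<delta>/2)"] conjI allI impI)
    show "0 < min (1/2) (\<delta>/2)" using dpos by simp
    fix a :: real and s T
    assume a: "0 \<le> a \<and> a < min (1/2) (\<delta>/2) \<and> a \<le> 1"
    show "coordinatewise_injective d K a"
      unfolding coordinatewise_injective_def
    proof (intro allI impI ballI)
      fix j f f' assume j: "j < d" and f: "f \<in> coord_maps d K a j" and f': "f' \<in> coord_maps d K a j"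
        and ne: "\<exists>x\<in>{0..1}. f x \<noteq> f' x"
      obtain e where e: "\<forall>i<d. e i \<in> {0, 1::real}" and fe: "f = (\<lambda>x. a * x + (1 - a) * (\<Sum>i<d. e i * K i j))"
        using f unfolding coord_maps_def by auto
      obtain e' where e': "\<forall>i<d. e' i \<in> {0, 1::real}" and fe': "f' = (\<lambda>x. a * x + (1 - a) * (\<Sum>i<d. e' i * K i j))"
        using f' unfolding coord_maps_def by auto
      define A where "A = {i\<in>{..<d}. e i = 1}"
      define B where "B = {i\<in>{..<d}. e' i = 1}"
      have fA: "f = (\<lambda>x. a * x + (1 - a) * g A j)"
        using fe sum_eps[OF e, of K j] unfolding A_def g_def by simp
      have fB: "f' = (\<lambda>x. a * x + (1 - a) * g B j)"
        using fe' sum_eps[OF e', of K j] unfolding B_def g_def by simp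
      have neq: "g A j \<noteq> g B j" using ne fA fB by auto
      have "\<bar>g A j - g B j\<bar> \<in> D" unfolding D_def using neq j A_def B_def by blast
      hence gap: "\<delta> \<le> \<bar>g A j - g B j\<bar>" using dle by auto
      show "f ` {0..1} \<inter> f' ` {0..1} = {}"
      proof (rule ccontr)
        assume "f ` {0..1} \<inter> f' ` {0..1} \<noteq> {}"
        then obtain x y :: real where xy: "x \<in> {0..1}" "y \<in> {0..1}" "f x = f' y" by blast
        hence eq: "(1 - a) * (g A j - g B j) = a * (y - x)" using fA fB by (simp add: algebra_simps)
        have "\<bar>a * (y - x)\<bar> \<le> a" proof -
          have "\<bar>y - x\<bar> \<le> 1" using xy by auto
          thus ?thesis using a by (simp add: abs_mult mult_left_le)
        qed
        moreover have "\<bar>(1 - a) * (g A j - g B j)\<bar> = (1 - a) * \<bar>g A j - g B j\<bar>" using a by (simp add: abs_mult)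
        ultimately have "(1 - a) * \<bar>g A j - g B j\<bar> \<le> a" using eq a by (simp add: abs_mult)
        moreover have "(1 - a) * \<delta> \<le> (1 - a) * \<bar>g A j - g B j\<bar>" using gap a by (intro mult_left_mono) auto
        moreover have "(1 - a) * \<delta> \<ge> \<delta> / 2" proof -
          have "\<delta> * a \<le> \<delta> * (1/2)" using a dpos by (intro mult_left_mono) auto
          thus ?thesis by (simp add: algebra_simps)
        qed
        ultimately show False using a by linarith
      qed
    qed
  qed
qed

end
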